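(* Let $\mathfrak{n}=(V,\{\,,\})$ be a $2$-step nilpotent Lie algebra over $K$ with $Z(\mathfrak{n})\subseteq\{\mathfrak{n},\mathfrak{n}\}$, and let $x* y$ be an LR-structure on $\mathfrak{n}$ satisfying $\{\mathfrak{n},\mathfrak{n}\}*\mathfrak{n}=0$. Then the LR-structure is complete, i.e. all left multiplications $y\mapsto x*y$ are nilpotent.
   Context: $K$ is a field of characteristic zero, $V$ a finite-dimensional $K$-vector space. An LR-structure on a Lie algebra $\mathfrak{n}=(V,\{\,,\})$ is a bilinear product $x*y$ on $V$ such that for all $x,y,z\in V$: $x*y-y*x=\{x,y\}$, $x*(y*z)=y*(x*z)$, and $x*\{y,z\}=\{x*y,z\}+\{y,x*z\}$ (equivalently, $x\cdot y:=-x*y$ is a post-Lie algebra structure on the pair (abelian Lie algebra on $V$, $\mathfrak{n}$)). $Z(\mathfrak{n})$ is the center, $\{\mathfrak{n},\mathfrak{n}\}$ the derived algebra. A Lie algebra is called $2$-step nilpotent here if it is nilpotent of class at most $2$. *)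

theory Defs
  imports Complex_Main
begin

definition bilinear_on :: "('k::field \<Rightarrow> 'v::ab_group_add \<Rightarrow> 'v) \<Rightarrow> ('v \<Rightarrow> 'v \<Rightarrow> 'v) \<Rightarrow> bool" where
  "bilinear_on scale m \<longleftrightarrow>
     (\<forall>x y z. m (x + y) z = m x z + m y z) \<and>
     (\<forall>x y z. m x (y + z) = m x y + m x z) \<and>
     (\<forall>a x y. m (scale a x) y = scale a (m x y)) \<and>
     (\<forall>a x y. m x (scale a y) = scale a (m x y))"

definition lie_algebra :: "('k::field \<Rightarrow> 'v::ab_group_add \<Rightarrow> 'v) \<Rightarrow> ('v \<Rightarrow> 'v \<Rightarrow> 'v) \<Rightarrow> bool" where
  "lie_algebra scale br \<longleftrightarrow> bilinear_on scale br \<and>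
     (\<forall>x. br x x = 0) \<and>
     (\<forall>x y z. br x (br y z) + br y (br z x) + br z (br x y) = 0)"

definition two_step_nilpotent :: "('v::ab_group_add \<Rightarrow> 'v \<Rightarrow> 'v) \<Rightarrow> bool" where
  "two_step_nilpotent br \<longleftrightarrow> (\<forall>x y z. br (br x y) z = 0)"

definition lie_center :: "('v::ab_group_add \<Rightarrow> 'v \<Rightarrow> 'v) \<Rightarrow> 'v set" where
  "lie_center br = {z. \<forall>x. br z x = 0}"

definition derived_algebra :: "('k::field \<Rightarrow> 'v::ab_group_add \<Rightarrow> 'v) \<Rightarrow> ('v \<Rightarrow> 'v \<Rightarrow> 'v) \<Rightarrow> 'v set" where
  "derived_algebra scale br = module.span scale {br x y | x y. True}"

definition LR_structure :: "('k::field \<Rightarrow> 'v::ab_group_add \<Rightarrow> 'v) \<Rightarrow> ('v \<Rightarrow> 'v \<Rightarrow> 'v) \<Rightarrow> ('v \<Rightarrow> 'v \<Rightarrow> 'v) \<Rightarrow> bool" where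
  "LR_structure scale br m \<longleftrightarrow> bilinear_on scale m \<and>
     (\<forall>x y. m x y - m y x = br x y) \<and>
     (\<forall>x y z. m x (m y z) = m y (m x z)) \<and>
     (\<forall>x y z. m x (br y z) = br (m x y) z + br y (m x z))"

definition LR_complete :: "('v::zero \<Rightarrow> 'v \<Rightarrow> 'v) \<Rightarrow> bool" where
  "LR_complete m \<longleftrightarrow> (\<forall>x. \<exists>k. ((\<lambda>y. m x y) ^^ k) = (\<lambda>_. 0))"

end

theory Submission
  imports Defs
begin

context
  fixes scale :: "'k::field_char_0 \<Rightarrow> 'v::ab_group_add \<Rightarrow> 'v"
    and br :: "'v \<Rightarrow> 'v \<Rightarrow> 'v"
    and m :: "'v \<Rightarrow> 'v \<Rightarrow> 'v"
    and Bs :: "'v set"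
  assumes fd: "finite_dimensional_vector_space scale Bs"
    and la: "lie_algebra scale br"
    and tn: "two_step_nilpotent br"
    and lr: "LR_structure scale br m"
    and cz: "\<forall>u \<in> lie_center br. \<forall>y. m u y = 0"
begin

interpretation fd: finite_dimensional_vector_space scale Bs by (rule fd)

lemma m_addL: "m (a + b) c = m a c + m b c"
  using lr unfolding LR_structure_def bilinear_on_def by blast
lemma m_addR: "m c (a + b) = m c a + m c b"
  using lr unfolding LR_structure_def bilinear_on_def by blast
lemma m_scaleR: "m c (scale k a) = scale k (m c a)"
  using lr unfolding LR_structure_def bilinear_on_def by blast
lemma m_comm: "m x y - m y x = br x y"
  using lr unfolding LR_structure_def by blast
lemma m_lsym: "m x (m y z) = m y (m x z)"
  using lr unfolding LR_structure_def by blast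
lemma m_der: "m x (br y z) = br (m x y) z + br y (m x z)"
  using lr unfolding LR_structure_def by blast
lemma br_addL: "br (a + b) c = br a c + br b c"
  using la unfolding lie_algebra_def bilinear_on_def by blast
lemma br_addR: "br c (a + b) = br c a + br c b"
  using la unfolding lie_algebra_def bilinear_on_def by blast
lemma br_self: "br a a = 0"
  using la unfolding lie_algebra_def by blast

lemma m_diffR: "m a (b - c) = m a b - m a c"
  using m_addR[of a "b - c" c] by (simp add: algebra_simps)
lemma m_zeroR: "m a 0 = 0"
  using m_addR[of a 0 0] by simp
lemma br_diffR: "br a (b - c) = br a b - br a c"
  using br_addR[of a "b - c" c] by (simp add: algebra_simps)

lemma br_anti: "br a b = - br b a"
proof -
  have "0 = br (a + b) (a + b)" by (simp add: br_self)
  also have "\<dots> = br a a + br a b + (br b a + br b b)"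
    by (simp add: br_addL br_addR add.assoc)
  finally show ?thesis by (simp add: br_self eq_neg_iff_add_eq_0 add.commute)
qed

lemma br_in_Z: "br a b \<in> lie_center br"
  using tn unfolding two_step_nilpotent_def lie_center_def by blast

lemma Z_left: "u \<in> lie_center br \<Longrightarrow> m y u = 0"
proof -
  assume u: "u \<in> lie_center br"
  have "m u y - m y u = br u y" by (rule m_comm)
  moreover have "br u y = 0" using u unfolding lie_center_def by blast
  moreover have "m u y = 0" using u cz by blast
  ultimately show ?thesis by simp
qed

lemma Z_right: "u \<in> lie_center br \<Longrightarrow> br a u = 0"
  using br_anti[of a u] unfolding lie_center_def by simp

lemma ecomm: "m w (m x y) = m w (m y x)"
proof -
  have "m w (m x y) - m w (m y x) = m w (br x y)" using m_diffR m_comm by metis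
  also have "\<dots> = 0" using Z_left[OF br_in_Z] .
  finally show ?thesis by simp
qed

lemma two_zero: "v + v = 0 \<Longrightarrow> v = (0::'v)"
proof -
  assume h: "v + v = 0"
  have "scale (1/2) (v + v) = scale (1/2) v + scale (1/2) v"
    by (simp add: fd.scale_right_distrib)
  also have "\<dots> = scale (1/2 + 1/2) v" by (rule fd.scale_left_distrib[symmetric])
  also have "(1/2 + 1/2 :: 'k) = 1" by simp
  also have "scale 1 v = v" by simp
  finally show ?thesis using h by simp
qed

lemma idem_Z: assumes "m e e = e" shows "e \<in> lie_center br"
proof -
  have st: "br e z + br e (m e z) = 0" for z
  proof -
    have "m e (br e z) = br (m e e) z + br e (m e z)" by (rule m_der)
    moreover have "m e (br e z) = 0" using Z_left[OF br_in_Z] .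
    ultimately show ?thesis using assms by simp
  qed
  have ee: "br e (m e (m e z)) = br e (m e z)" for z
  proof -
    have "m e (m e z) = m e (m z e)" by (rule ecomm)
    also have "\<dots> = m z (m e e)" by (rule m_lsym)
    also have "\<dots> = m z e" using assms by simp
    finally have 1: "m e (m e z) = m z e" .
    have "br e (m e z) - br e (m z e) = br e (br e z)" using br_diffR m_comm by metis
    also have "\<dots> = 0" using Z_right[OF br_in_Z] .
    finally show ?thesis using 1 by simp
  qed
  have "br e z = 0" for z
  proof -
    have "br e (m e z) + br e (m e (m e z)) = 0" using st[of "m e z"] .
    then have "br e (m e z) + br e (m e z) = 0" using ee by simp
    then have "br e (m e z) = 0" by (rule two_zero)
    then show ?thesis using st[of z] by simp
  qed
  then show ?thesis unfolding lie_center_def by blast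
qed

lemma pow_add: "(m x ^^ n) (a + b) = (m x ^^ n) a + (m x ^^ n) b"
  by (induction n) (auto simp: m_addR)
lemma pow_zero: "(m x ^^ n) 0 = 0"
  by (induction n) (auto simp: m_zeroR)
lemma pow_scale: "(m x ^^ n) (scale k a) = scale k ((m x ^^ n) a)"
  by (induction n) (auto simp: m_scaleR)
lemma pow_comm: "m w ((m x ^^ n) y) = (m x ^^ n) (m w y)"
  by (induction n) (simp, metis m_lsym funpow.simps(2) comp_apply)

lemma range_sub: "fd.subspace (range (m x ^^ n))"
proof (rule fd.subspaceI)
  show "0 \<in> range (m x ^^ n)" using pow_zero[where x=x and n=n] by (metis rangeI)
next
  fix a b assume "a \<in> range (m x ^^ n)" "b \<in> range (m x ^^ n)"
  then obtain a' b' where "a = (m x ^^ n) a'" "b = (m x ^^ n) b'" by blast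
  then show "a + b \<in> range (m x ^^ n)" by (metis pow_add rangeI)
next
  fix c a assume "a \<in> range (m x ^^ n)"
  then obtain a' where "a = (m x ^^ n) a'" by blast
  then show "scale c a \<in> range (m x ^^ n)" by (metis pow_scale rangeI)
qed

lemma range_Suc: "range (m x ^^ Suc n) = m x ` range (m x ^^ n)"
  by (simp add: image_comp)

lemma range_mono: "range (m x ^^ Suc n) \<subseteq> range (m x ^^ n)"
  by (induction n) (auto simp: range_Suc)

lemma stabilize: "\<exists>N\<ge>1. range (m x ^^ N) = range (m x ^^ Suc N)"
proof (rule ccontr)
  assume "\<not> ?thesis"
  then have ne: "\<And>N. N \<ge> 1 \<Longrightarrow> range (m x ^^ Suc N) \<subset> range (m x ^^ N)"
    using range_mono by blast
  have lt: "fd.dim (range (m x ^^ Suc N)) < fd.dim (range (m x ^^ N))" if "N \<ge> 1" for N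
  proof -
    have a: "fd.span (range (m x ^^ Suc N)) = range (m x ^^ Suc N)"
      using range_sub fd.span_eq_iff by blast
    have b: "fd.span (range (m x ^^ N)) = range (m x ^^ N)"
      using range_sub fd.span_eq_iff by blast
    show ?thesis using fd.dim_psubset[of "range (m x ^^ Suc N)" "range (m x ^^ N)"] ne[OF that]
      unfolding a b by blast
  qed
  have "fd.dim (range (m x ^^ Suc n)) + n \<le> fd.dim (range (m x ^^ 1))" for n
  proof (induction n)
    case 0 then show ?case by simp
  next
    case (Suc n) then show ?case using lt[of "Suc n"] by simp
  qed
  then have "fd.dim (range (m x ^^ Suc (Suc fd.dimension))) + Suc fd.dimension \<le> fd.dimension"
    using fd.dim_subset_UNIV[of "range (m x ^^ 1)"] le_trans by blast
  then show False by simp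
qed

lemma stable_all: assumes "range (m x ^^ N) = range (m x ^^ Suc N)"
  shows "range (m x ^^ (N + k)) = range (m x ^^ N)"
proof (induction k)
  case 0 then show ?case by simp
next
  case (Suc k)
  have "range (m x ^^ (N + Suc k)) = m x ` range (m x ^^ (N + k))"
    using range_Suc[where x=x and n="N + k"] by simp
  also have "\<dots> = m x ` range (m x ^^ N)" using Suc by simp
  also have "\<dots> = range (m x ^^ N)" using assms range_Suc by simp
  finally show ?case .
qed

lemma nilp: "\<exists>k. (m x ^^ k) = (\<lambda>_. 0)"
proof -
  obtain N where N1: "N \<ge> 1" and st: "range (m x ^^ N) = range (m x ^^ Suc N)"
    using stabilize by blast
  define L where "L = m x"
  define M where "M = Suc N"
  have "range (L ^^ (N + (N + 2))) = range (L ^^ N)"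
    using stable_all[OF st] unfolding L_def by blast
  moreover have "N + (N + 2) = M + M" unfolding M_def by simp
  ultimately have "(L ^^ N) x \<in> range (L ^^ (M + M))" by (metis rangeI)
  then obtain c where c: "(L ^^ N) x = (L ^^ (M + M)) c" by blast
  obtain N' where N': "N = Suc N'" using N1 by (cases N) auto
  have pc: "m w ((L ^^ n) y) = (L ^^ n) (m w y)" for w n y
    unfolding L_def by (rule pow_comm)
  have sw: "(L ^^ N) (m a b) = (L ^^ N) (m b a)" for a b
    unfolding N' funpow_Suc_right comp_def L_def using ecomm by simp
  define e where "e = (L ^^ M) c"
  have LM: "(L ^^ M) y = (L ^^ N) (L y)" for y
    unfolding M_def funpow_Suc_right by simp
  have LMM: "(L ^^ (M + M)) y = (L ^^ M) ((L ^^ M) y)" for y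
    by (simp add: funpow_add)
  have "m e e = (L ^^ M) (m e c)" unfolding e_def by (rule pc)
  also have "\<dots> = (L ^^ N) (L (m e c))" by (rule LM)
  also have "L (m e c) = L (m c e)" unfolding L_def by (rule ecomm)
  also have "(L ^^ N) (L (m c e)) = (L ^^ M) (m c e)" by (rule LM[symmetric])
  also have "m c e = (L ^^ M) (m c c)" unfolding e_def by (rule pc)
  also have "(L ^^ M) ((L ^^ M) (m c c)) = (L ^^ (M + M)) (m c c)" by (rule LMM[symmetric])
  also have "\<dots> = m c ((L ^^ (M + M)) c)" by (rule pc[symmetric])
  also have "\<dots> = m c ((L ^^ N) x)" using c by simp
  also have "\<dots> = (L ^^ N) (m c x)" by (rule pc)
  also have "\<dots> = (L ^^ N) (m x c)" by (rule sw)
  also have "\<dots> = e" using LM[of c] unfolding e_def L_def by simp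
  finally have "m e e = e" .
  then have eZ: "e \<in> lie_center br" by (rule idem_Z)
  have "(L ^^ M) y = 0" for y
  proof -
    have "(L ^^ M) y = (L ^^ N) (m x y)" using LM[of y] unfolding L_def by simp
    also have "\<dots> = (L ^^ N) (m y x)" by (rule sw)
    also have "\<dots> = m y ((L ^^ N) x)" by (rule pc[symmetric])
    also have "\<dots> = m y ((L ^^ (M + M)) c)" using c by simp
    also have "\<dots> = (L ^^ (M + M)) (m y c)" by (rule pc)
    also have "\<dots> = (L ^^ M) ((L ^^ M) (m y c))" by (rule LMM)
    also have "(L ^^ M) (m y c) = m y e" unfolding e_def by (rule pc[symmetric])
    also have "m y e = 0" using Z_left[OF eZ] .
    also have "(L ^^ M) 0 = 0" unfolding L_def by (rule pow_zero)
    finally show ?thesis .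
  qed
  then show ?thesis unfolding L_def by blast
qed

end

theorem corollary4p9:
  fixes scale :: "'k::field_char_0 \<Rightarrow> 'v::ab_group_add \<Rightarrow> 'v"
    and br :: "'v \<Rightarrow> 'v \<Rightarrow> 'v"
    and m :: "'v \<Rightarrow> 'v \<Rightarrow> 'v"
  assumes "\<exists>B. finite_dimensional_vector_space scale B"
    and "lie_algebra scale br"
    and "two_step_nilpotent br"
    and "lie_center br \<subseteq> derived_algebra scale br"
    and "LR_structure scale br m"
    and "\<forall>u \<in> derived_algebra scale br. \<forall>y. m u y = 0"
  shows "LR_complete m"
proof -
  obtain B where B: "finite_dimensional_vector_space scale B" using assms(1) by blast
  have cz: "\<forall>u \<in> lie_center br. \<forall>y. m u y = 0" using assms(4,6) by blast
  show ?thesis unfolding LR_complete_def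
    using nilp[OF B assms(2) assms(3) assms(5) cz] by blast
qed

end
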